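(* Consider the Network Design Problem with $\bar y_a=\infty$ for all $a\in A$, and suppose it has an optimal solution. Then there exist an optimal solution $(x,y)$ and an $s$--$t$ path $P$ in (the underlying undirected graph of) $G$ such that $x_a=0$ and $y_a=0$ for all $a\notin P$.
   Context: Fix $r\ge1$. Let $G=(V,A)$ be a weakly connected directed graph with distinct source $s$ and sink $t$. For $y\in\mathbb{R}_{\ge 0}^A$ let $\operatorname{supp}(y)=\{a: y_a>0\}$, $G'=(V,\operatorname{supp}(y))$ with node-arc incidence matrix $\Gamma'$, and $R^y_{s,t}=\min\{\sum_{a\in\operatorname{supp}(y)} |f_a|^{r+1}/y_a^{r} : \Gamma' f=\mathbf{1}_s-\mathbf{1}_t\}$ ($=\infty$ if $s,t$ are disconnected in $G'$); this is the effective resistance of the network induced by $y$. The Network Design Problem, given $c,\gamma\in\mathbb{R}_{\ge0}^A$, bounds $\bar y\in(\mathbb{R}_{\ge0}\cup\{\infty\})^A$ and $B>0$, is: minimize $\sum_{a\in A}(c_a y_a+\gamma_a x_a)$ over $x\in\{0,1\}^A$, $y\in\mathbb{R}_{\ge0}^A$ subject to $R^y_{s,t}\le B$, $y_a\le \bar y_a$, and $y_a>0\Rightarrow x_a=1$ for all $a$. Arc orientations play no role in paths here. *)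

theory Defs
  imports Complex_Main "HOL-Library.Extended_Real"
begin

definition weakly_connected ::
  "'v set \<Rightarrow> 'a set \<Rightarrow> ('a \<Rightarrow> 'v) \<Rightarrow> ('a \<Rightarrow> 'v) \<Rightarrow> bool" where
  "weakly_connected V A tail head \<longleftrightarrow>
     (\<forall>u\<in>V. \<forall>v\<in>V. (u, v) \<in> ({(tail a, head a) | a. a \<in> A} \<union> {(head a, tail a) | a. a \<in> A})\<^sup>*)"

definition st_flows ::
  "'v set \<Rightarrow> 'a set \<Rightarrow> ('a \<Rightarrow> 'v) \<Rightarrow> ('a \<Rightarrow> 'v) \<Rightarrow> 'v \<Rightarrow> 'v \<Rightarrow> ('a \<Rightarrow> real) \<Rightarrow> ('a \<Rightarrow> real) set" where
  "st_flows V A tail head s t y =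
     {f. (\<forall>a. a \<notin> {a\<in>A. y a > 0} \<longrightarrow> f a = 0) \<and>
         (\<forall>v\<in>V. (\<Sum>a\<in>{a\<in>A. y a > 0 \<and> tail a = v}. f a) - (\<Sum>a\<in>{a\<in>A. y a > 0 \<and> head a = v}. f a)
                 = (if v = s then 1 else if v = t then -1 else 0))}"

text \<open>Effective resistance R^y_{s,t}; the infimum of the empty set is \<infinity>
  (s,t disconnected in G').  When feasible flows exist the infimum is attained.\<close>
definition eff_resistance ::
  "'v set \<Rightarrow> 'a set \<Rightarrow> ('a \<Rightarrow> 'v) \<Rightarrow> ('a \<Rightarrow> 'v) \<Rightarrow> 'v \<Rightarrow> 'v \<Rightarrow> real \<Rightarrow> ('a \<Rightarrow> real) \<Rightarrow> ereal" where
  "eff_resistance V A tail head s t r y =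
     Inf {ereal (\<Sum>a\<in>{a\<in>A. y a > 0}. \<bar>f a\<bar> powr (r + 1) / y a powr r) | f.
            f \<in> st_flows V A tail head s t y}"

definition ndp_feasible ::
  "'v set \<Rightarrow> 'a set \<Rightarrow> ('a \<Rightarrow> 'v) \<Rightarrow> ('a \<Rightarrow> 'v) \<Rightarrow> 'v \<Rightarrow> 'v \<Rightarrow> real \<Rightarrow> ('a \<Rightarrow> ereal) \<Rightarrow> real
   \<Rightarrow> ('a \<Rightarrow> real) \<Rightarrow> ('a \<Rightarrow> real) \<Rightarrow> bool" where
  "ndp_feasible V A tail head s t r ybar B x y \<longleftrightarrow>
     (\<forall>a\<in>A. (x a = 0 \<or> x a = 1) \<and> y a \<ge> 0 \<and> ereal (y a) \<le> ybar a \<and> (y a > 0 \<longrightarrow> x a = 1)) \<and>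
     eff_resistance V A tail head s t r y \<le> ereal B"

definition ndp_cost ::
  "'a set \<Rightarrow> ('a \<Rightarrow> real) \<Rightarrow> ('a \<Rightarrow> real) \<Rightarrow> ('a \<Rightarrow> real) \<Rightarrow> ('a \<Rightarrow> real) \<Rightarrow> real" where
  "ndp_cost A c \<gamma> x y = (\<Sum>a\<in>A. c a * y a + \<gamma> a * x a)"

definition ndp_optimal ::
  "'v set \<Rightarrow> 'a set \<Rightarrow> ('a \<Rightarrow> 'v) \<Rightarrow> ('a \<Rightarrow> 'v) \<Rightarrow> 'v \<Rightarrow> 'v \<Rightarrow> real \<Rightarrow> ('a \<Rightarrow> real) \<Rightarrow> ('a \<Rightarrow> real)
   \<Rightarrow> ('a \<Rightarrow> ereal) \<Rightarrow> real \<Rightarrow> ('a \<Rightarrow> real) \<Rightarrow> ('a \<Rightarrow> real) \<Rightarrow> bool" where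
  "ndp_optimal V A tail head s t r c \<gamma> ybar B x y \<longleftrightarrow>
     ndp_feasible V A tail head s t r ybar B x y \<and>
     (\<forall>x' y'. ndp_feasible V A tail head s t r ybar B x' y' \<longrightarrow> ndp_cost A c \<gamma> x y \<le> ndp_cost A c \<gamma> x' y')"

definition undirected_st_path ::
  "'a set \<Rightarrow> ('a \<Rightarrow> 'v) \<Rightarrow> ('a \<Rightarrow> 'v) \<Rightarrow> 'v \<Rightarrow> 'v \<Rightarrow> 'a set \<Rightarrow> bool" where
  "undirected_st_path A tail head s t P \<longleftrightarrow>
     (\<exists>vs es. length vs = Suc (length es) \<and> List.hd vs = s \<and> last vs = t \<and> distinct vs \<and>
        set es \<subseteq> A \<and> P = set es \<and>
        (\<forall>i<length es. (tail (es ! i) = vs ! i \<and> head (es ! i) = vs ! Suc i) \<or>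
                        (head (es ! i) = vs ! i \<and> tail (es ! i) = vs ! Suc i)))"

end

theory Submission
  imports Defs "HOL-Analysis.Analysis"
begin

definition Phi :: "'a set \<Rightarrow> real \<Rightarrow> ('a \<Rightarrow> real) \<Rightarrow> ('a \<Rightarrow> real) \<Rightarrow> real" where
  "Phi A r y f = (\<Sum>a\<in>{a\<in>A. y a > 0}. \<bar>f a\<bar> powr (r + 1) / y a powr r)"

lemma cont_Phi:
  assumes "r \<ge> 0"
  shows "continuous_on UNIV (Phi A r y)"
  unfolding Phi_def
proof (intro continuous_on_sum continuous_on_divide continuous_on_const)
  fix a assume "a \<in> {a\<in>A. y a > 0}"
  then show "\<forall>x\<in>UNIV. y a powr r \<noteq> 0" by auto
  show "continuous_on UNIV (\<lambda>x::'a\<Rightarrow>real. \<bar>x a\<bar> powr (r + 1))"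
    by (rule continuous_on_powr') (auto intro!: continuous_intros continuous_on_product_coordinates simp: assms add_nonneg_pos)
qed
lemma closed_flows:
  "closed (st_flows V A tail head s t y)"
proof -
  let ?S = "{a\<in>A. y a > 0}"
  let ?L = "\<lambda>v (f::'a\<Rightarrow>real). (\<Sum>a\<in>{a\<in>A. y a > 0 \<and> tail a = v}. f a) - (\<Sum>a\<in>{a\<in>A. y a > 0 \<and> head a = v}. f a)"
  let ?R = "\<lambda>v. (if v = s then 1 else if v = t then -1 else (0::real))"
  have eq: "st_flows V A tail head s t y =
     (\<Inter>a\<in>-?S. {f. f a = 0}) \<inter> (\<Inter>v\<in>V. {f. ?L v f = ?R v})"
    unfolding st_flows_def by (auto; metis (no_types, lifting) eq_iff_diff_eq_0)
  have c1: "closed (\<Inter>a\<in>-?S. {f::'a\<Rightarrow>real. f a = 0})"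
    by (intro closed_INT ballI closed_Collect_eq continuous_on_product_coordinates continuous_on_const)
  have c2: "closed (\<Inter>v\<in>V. {f. ?L v f = ?R v})"
    by (intro closed_INT ballI closed_Collect_eq continuous_on_diff continuous_on_sum continuous_on_product_coordinates continuous_on_const)
  show ?thesis unfolding eq by (intro closed_Int c1 c2)
qed

lemma flow_min_attained:
  assumes "finite A" "r \<ge> 0" "st_flows V A tail head s t y \<noteq> {}"
  shows "\<exists>f\<in>st_flows V A tail head s t y. \<forall>g\<in>st_flows V A tail head s t y. Phi A r y f \<le> Phi A r y g"
proof -
  let ?F = "st_flows V A tail head s t y"
  let ?S = "{a\<in>A. y a > 0}"
  obtain f0 where f0: "f0 \<in> ?F" using assms by auto
  define M where "M = Phi A r y f0"
  define K where "K a = (M * y a powr r) powr (1/(r+1))" for a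
  define Bx where "Bx = PiE UNIV (\<lambda>a. if a \<in> ?S then {-K a..K a} else {0::real})"
  let ?T = "?F \<inter> {g. Phi A r y g \<le> M}"
  have cBx: "compact Bx"
  proof -
    have "compactin (product_topology (\<lambda>i. euclidean) UNIV) Bx"
      unfolding Bx_def compactin_PiE by auto
    then show ?thesis by (simp add: euclidean_product_topology)
  qed
  have sub: "?T \<subseteq> Bx"
  proof
    fix g assume g: "g \<in> ?T"
    have "g a \<in> (if a \<in> ?S then {-K a..K a} else {0})" for a
    proof (cases "a \<in> ?S")
      case True
      have nn: "\<And>b. b \<in> ?S \<Longrightarrow> 0 \<le> \<bar>g b\<bar> powr (r + 1) / y b powr r" by auto
      have "\<bar>g a\<bar> powr (r + 1) / y a powr r \<le> Phi A r y g"
        unfolding Phi_def using True assms(1) by (intro member_le_sum nn) auto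
      also have "\<dots> \<le> M" using g by auto
      finally have "\<bar>g a\<bar> powr (r + 1) \<le> M * y a powr r"
        using True by (simp add: divide_le_eq)
      then have "(\<bar>g a\<bar> powr (r + 1)) powr (1/(r+1)) \<le> K a"
        unfolding K_def using assms(2) by (intro powr_mono2) auto
      moreover have "(\<bar>g a\<bar> powr (r + 1)) powr (1/(r+1)) = \<bar>g a\<bar>"
        using assms(2) by (simp add: powr_powr)
      ultimately show ?thesis using True by auto
    next
      case False
      then show ?thesis using g unfolding st_flows_def by auto
    qed
    then show "g \<in> Bx" unfolding Bx_def by auto
  qed
  have cT: "compact ?T"
  proof -
    have "closed ?T"
      by (intro closed_Int closed_flows closed_Collect_le cont_Phi assms(2) continuous_on_const)
    then have "compact (Bx \<inter> ?T)" using cBx by auto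
    moreover have "Bx \<inter> ?T = ?T" using sub by auto
    ultimately show ?thesis by simp
  qed
  have ne: "?T \<noteq> {}" using f0 M_def by auto
  obtain f where f: "f \<in> ?T" "\<And>g. g \<in> ?T \<Longrightarrow> Phi A r y f \<le> Phi A r y g"
    using continuous_attains_inf[OF cT ne continuous_on_subset[OF cont_Phi[OF assms(2)]]] by blast
  show ?thesis
  proof (intro bexI[of _ f] ballI)
    fix g assume "g \<in> ?F"
    then show "Phi A r y f \<le> Phi A r y g" using f by (cases "Phi A r y g \<le> M") auto
  qed (use f in auto)
qed

definition joins :: "('a \<Rightarrow> 'v) \<Rightarrow> ('a \<Rightarrow> 'v) \<Rightarrow> 'a \<Rightarrow> 'v \<Rightarrow> 'v \<Rightarrow> bool" where
  "joins tail head a u v \<longleftrightarrow> (tail a = u \<and> head a = v) \<or> (head a = u \<and> tail a = v)"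

inductive walk :: "'a set \<Rightarrow> ('a \<Rightarrow> 'v) \<Rightarrow> ('a \<Rightarrow> 'v) \<Rightarrow> 'v \<Rightarrow> 'v \<Rightarrow> 'v list \<Rightarrow> 'a list \<Rightarrow> bool"
  for S tail head where
  wNil: "walk S tail head u u [u] []"
| wCons: "a \<in> S \<Longrightarrow> joins tail head a u v \<Longrightarrow> walk S tail head v w vs es \<Longrightarrow> walk S tail head u w (u#vs) (a#es)"

lemma walk_hd: "walk S tail head u w vs es \<Longrightarrow> vs \<noteq> [] \<and> hd vs = u"
  by (induction rule: walk.induct) auto

lemma walk_verts: "walk S tail head u w vs es \<Longrightarrow> b \<in> set es \<Longrightarrow> tail b \<in> set vs \<and> head b \<in> set vs"
proof (induction rule: walk.induct)
  case (wCons a u v w vs es)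
  have "vs \<noteq> []" "hd vs = v" using walk_hd[OF wCons(3)] by auto
  then have v: "v \<in> set vs" by (cases vs) auto
  have "tail a \<in> set (u#vs) \<and> head a \<in> set (u#vs)"
    using wCons(2) v unfolding joins_def by auto
  moreover have "b \<in> set es \<Longrightarrow> tail b \<in> set (u#vs) \<and> head b \<in> set (u#vs)"
    using wCons(4) by auto
  ultimately show ?case using wCons(5) by (cases "b = a") auto
qed auto

lemma walk_distinct: "walk S tail head u w vs es \<Longrightarrow> distinct vs \<Longrightarrow> distinct es"
proof (induction rule: walk.induct)
  case (wCons a u v w vs es)
  have "a \<notin> set es"
  proof
    assume "a \<in> set es"
    then have "tail a \<in> set vs \<and> head a \<in> set vs" using walk_verts[OF wCons(3)] by auto
    moreover have "tail a = u \<or> head a = u" using wCons(2) by (auto simp: joins_def)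
    ultimately show False using wCons(5) by auto
  qed
  then show ?case using wCons by auto
qed auto

lemma walk_suffix:
  assumes "walk S tail head u w vs es" "vs = xs @ z # ys" "\<And>b. wgt b \<ge> (0::real)"
  shows "\<exists>es2. walk S tail head z w (z#ys) es2 \<and> set es2 \<subseteq> set es \<and> sum_list (map wgt es2) \<le> sum_list (map wgt es)"
  using assms
proof (induction arbitrary: xs rule: walk.induct)
  case (wNil u)
  then show ?case by (cases xs) (auto intro: walk.wNil)
next
  case (wCons a u v w vs es)
  show ?case
  proof (cases xs)
    case Nil
    then show ?thesis using wCons by (auto intro: walk.wCons)
  next
    case (Cons x xs')
    then have "vs = xs' @ z # ys" using wCons by auto
    then obtain es2 where "walk S tail head z w (z#ys) es2" "set es2 \<subseteq> set es" "sum_list (map wgt es2) \<le> sum_list (map wgt es)"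
      using wCons.IH wCons.prems(2) by metis
    moreover have "wgt a \<ge> 0" using wCons by auto
    ultimately show ?thesis by (intro exI[of _ es2]) auto
  qed
qed

lemma walk_simple:
  assumes "walk S tail head u w vs es" "\<And>b. wgt b \<ge> (0::real)"
  shows "\<exists>vs' es'. walk S tail head u w vs' es' \<and> distinct vs' \<and> set es' \<subseteq> set es \<and> sum_list (map wgt es') \<le> sum_list (map wgt es)"
  using assms
proof (induction rule: walk.induct)
  case (wNil u)
  then show ?case by (auto intro: walk.wNil)
next
  case (wCons a u v w vs es)
  obtain vs' es' where h: "walk S tail head v w vs' es'" "distinct vs'" "set es' \<subseteq> set es" "sum_list (map wgt es') \<le> sum_list (map wgt es)"
    using wCons.IH wCons.prems by metis
  have wa: "wgt a \<ge> 0" using wCons by auto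
  show ?case
  proof (cases "u \<in> set vs'")
    case False
    then show ?thesis using h wa wCons(1,2)
      by (intro exI[of _ "u#vs'"] exI[of _ "a#es'"]) (auto intro: walk.wCons)
  next
    case True
    then obtain xs ys where sp: "vs' = xs @ u # ys" by (meson split_list)
    then obtain es2 where "walk S tail head u w (u#ys) es2" "set es2 \<subseteq> set es'" "sum_list (map wgt es2) \<le> sum_list (map wgt es')"
      using walk_suffix[OF h(1) sp] wCons.prems by metis
    moreover have "distinct (u#ys)" using h(2) sp by auto
    ultimately show ?thesis using h wa
      by (intro exI[of _ "u#ys"] exI[of _ es2]) auto
  qed
qed

lemma walk_set_V:
  assumes "walk S tail head u w vs es" "u \<in> V" "S \<subseteq> A" "\<forall>a\<in>A. tail a \<in> V \<and> head a \<in> V"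
  shows "set vs \<subseteq> V"
  using assms
proof (induction rule: walk.induct)
  case (wCons a u v w vs es)
  then have "v \<in> V" by (auto simp: joins_def)
  then show ?case using wCons by auto
qed auto

fun pf :: "('a \<Rightarrow> 'v) \<Rightarrow> 'v list \<Rightarrow> 'a list \<Rightarrow> 'a \<Rightarrow> real" where
  "pf tail (u#vs) (a#es) b = (if b = a then (if tail a = u then 1 else -1) else 0) + pf tail vs es b"
| "pf tail _ _ b = 0"

lemma pf_zero: "walk S tail head u w vs es \<Longrightarrow> b \<notin> set es \<Longrightarrow> pf tail vs es b = 0"
  by (induction rule: walk.induct) auto

lemma pf_abs: "walk S tail head u w vs es \<Longrightarrow> distinct es \<Longrightarrow> b \<in> set es \<Longrightarrow> \<bar>pf tail vs es b\<bar> = 1"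
proof (induction rule: walk.induct)
  case (wCons a u v w vs es)
  show ?case
  proof (cases "b = a")
    case True
    then have "pf tail vs es b = 0" using wCons pf_zero by fastforce
    then show ?thesis using True by auto
  next
    case False
    then show ?thesis using wCons by auto
  qed
qed auto

lemma walk_index:
  "walk S tail head u w vs es \<Longrightarrow> length vs = Suc (length es) \<and> hd vs = u \<and> last vs = w \<and> set es \<subseteq> S \<and>
     (\<forall>i<length es. joins tail head (es!i) (vs!i) (vs!Suc i))"
proof (induction rule: walk.induct)
  case (wCons a u v w vs es)
  have "vs \<noteq> []" "hd vs = v" using walk_hd[OF wCons(3)] by auto
  then show ?case using wCons
    by (auto simp: nth_Cons' less_Suc_eq_0_disj hd_conv_nth)
qed auto

lemma pf_net:
  assumes "walk S tail head u w vs es" "finite T" "set es \<subseteq> T"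
  shows "(\<Sum>b\<in>T. pf tail vs es b * ((if tail b = x then 1 else 0) - (if head b = x then 1 else 0)))
       = (if u = x then 1 else 0) - (if w = x then (1::real) else 0)"
  using assms
proof (induction rule: walk.induct)
  case (wNil u)
  then show ?case by simp
next
  case (wCons a u v w vs es)
  let ?g = "\<lambda>b. (if tail b = x then 1 else 0) - (if head b = x then 1 else (0::real))"
  let ?sig = "(if tail a = u then 1 else -1::real)"
  have pt: "\<And>b. pf tail (u#vs) (a#es) b * ?g b = (if b = a then ?sig * ?g b else 0) + pf tail vs es b * ?g b"
    by (simp only: pf.simps distrib_right) simp
  have "(\<Sum>b\<in>T. pf tail (u#vs) (a#es) b * ?g b)
      = (\<Sum>b\<in>T. (if b = a then ?sig * ?g b else 0)) + (\<Sum>b\<in>T. pf tail vs es b * ?g b)"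
    by (simp only: pt sum.distrib)
  also have "(\<Sum>b\<in>T. (if b = a then ?sig * ?g b else 0)) = ?sig * ?g a"
    using wCons by (simp add: sum.delta')
  also have "?sig * ?g a = (if u = x then 1 else 0) - (if v = x then 1 else 0)"
    using wCons(2) by (auto simp: joins_def)
  finally show ?case using wCons by simp
qed

lemma flow_potential:
  assumes f: "f \<in> st_flows V A tail head s t y" and fin: "finite A" "finite V"
    and ends: "\<forall>a\<in>A. tail a \<in> V \<and> head a \<in> V" and st: "s \<in> V" "t \<in> V" "s \<noteq> t"
  shows "(\<Sum>a\<in>{a\<in>A. y a > 0}. f a * (p (tail a) - p (head a))) = p s - p t"
proof -
  let ?S = "{a\<in>A. y a > 0}"
  have finS: "finite ?S" using fin by auto
  have g1: "(\<Sum>a\<in>?S. f a * p (tail a)) = (\<Sum>v\<in>V. p v * (\<Sum>a\<in>{a\<in>A. y a > 0 \<and> tail a = v}. f a))"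
  proof -
    have "(\<Sum>a\<in>?S. f a * p (tail a)) = (\<Sum>v\<in>V. \<Sum>a\<in>{a\<in>?S. tail a = v}. f a * p (tail a))"
      using sum.group[OF finS fin(2), of tail "\<lambda>a. f a * p (tail a)"] ends by (simp add: image_subset_iff)
    also have "\<dots> = (\<Sum>v\<in>V. p v * (\<Sum>a\<in>{a\<in>A. y a > 0 \<and> tail a = v}. f a))"
      by (intro sum.cong refl) (auto simp: sum_distrib_left mult.commute intro!: sum.cong)
    finally show ?thesis .
  qed
  have g2: "(\<Sum>a\<in>?S. f a * p (head a)) = (\<Sum>v\<in>V. p v * (\<Sum>a\<in>{a\<in>A. y a > 0 \<and> head a = v}. f a))"
  proof -
    have "(\<Sum>a\<in>?S. f a * p (head a)) = (\<Sum>v\<in>V. \<Sum>a\<in>{a\<in>?S. head a = v}. f a * p (head a))"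
      using sum.group[OF finS fin(2), of head "\<lambda>a. f a * p (head a)"] ends by (simp add: image_subset_iff)
    also have "\<dots> = (\<Sum>v\<in>V. p v * (\<Sum>a\<in>{a\<in>A. y a > 0 \<and> head a = v}. f a))"
      by (intro sum.cong refl) (auto simp: sum_distrib_left mult.commute intro!: sum.cong)
    finally show ?thesis .
  qed
  have "(\<Sum>a\<in>?S. f a * (p (tail a) - p (head a))) = (\<Sum>a\<in>?S. f a * p (tail a)) - (\<Sum>a\<in>?S. f a * p (head a))"
    by (simp add: right_diff_distrib sum_subtractf)
  also have "\<dots> = (\<Sum>v\<in>V. p v * ((\<Sum>a\<in>{a\<in>A. y a > 0 \<and> tail a = v}. f a) - (\<Sum>a\<in>{a\<in>A. y a > 0 \<and> head a = v}. f a)))"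
    unfolding g1 g2 by (simp add: right_diff_distrib sum_subtractf)
  also have "\<dots> = (\<Sum>v\<in>V. p v * (if v = s then 1 else if v = t then -1 else 0))"
    using f unfolding st_flows_def by (intro sum.cong refl) auto
  also have "\<dots> = (\<Sum>v\<in>V. (if v = s then p s else 0) - (if v = t then p t else 0))"
    using st by (intro sum.cong refl) auto
  also have "\<dots> = p s - p t"
    using st fin by (simp add: sum_subtractf)
  finally show ?thesis .
qed

lemma young_arc:
  fixes r c y \<alpha> F :: real
  assumes "r > 0" "c > 0" "y > 0" "\<alpha> > 0" "F \<ge> 0"
  shows "c powr (r/(r+1)) * F \<le> (r/(r+1)) * (c*y/\<alpha>) + (1/(r+1)) * (\<alpha> powr r * (F powr (r+1) / y powr r))"
proof (cases "F = 0")
  case True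
  then show ?thesis using assms by auto
next
  case False
  then have F: "F > 0" using assms by auto
  let ?X = "c*y/\<alpha>" and ?Y = "\<alpha> powr r * (F powr (r+1) / y powr r)"
  have X: "?X > 0" and Y: "?Y > 0" using assms F by auto
  have "?X powr (r/(r+1)) * ?Y powr (1/(r+1)) \<le> (r/(r+1)) * ?X + (1/(r+1)) * ?Y"
    by (rule Youngs_inequality_0) (use assms X Y in \<open>auto simp: field_simps\<close>)
  moreover have "?X powr (r/(r+1)) * ?Y powr (1/(r+1)) = c powr (r/(r+1)) * F"
  proof -
    have "?X powr (r/(r+1)) = c powr (r/(r+1)) * y powr (r/(r+1)) / \<alpha> powr (r/(r+1))"
      using assms by (simp add: powr_mult powr_divide)
    moreover have "?Y powr (1/(r+1)) = \<alpha> powr (r/(r+1)) * F / y powr (r/(r+1))"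
    proof -
      have "?Y powr (1/(r+1)) = (\<alpha> powr r) powr (1/(r+1)) * ((F powr (r+1)) powr (1/(r+1)) / (y powr r) powr (1/(r+1)))"
        using assms F by (simp add: powr_mult powr_divide)
      also have "\<dots> = \<alpha> powr (r/(r+1)) * (F / y powr (r/(r+1)))"
        using assms F by (simp add: powr_powr)
      finally show ?thesis by simp
    qed
    ultimately have "?X powr (r/(r+1)) * ?Y powr (1/(r+1)) = (c powr (r/(r+1)) * y powr (r/(r+1)) / \<alpha> powr (r/(r+1))) * (\<alpha> powr (r/(r+1)) * F / y powr (r/(r+1)))"
      by (simp only:)
    also have "\<dots> = c powr (r/(r+1)) * F"
      using assms by (simp add: field_simps)
    finally show ?thesis .
  qed
  ultimately show ?thesis by simp
qed

lemma zero_arc: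
  fixes r y F :: real
  assumes "r > 0" "y > 0" "F > 0"
  shows "F powr (r+1) / y powr r = 1 / (y / F powr ((r+1)/r)) powr r"
proof -
  have "(y / F powr ((r+1)/r)) powr r = y powr r / (F powr ((r+1)/r)) powr r"
    using assms by (simp add: powr_divide)
  also have "(F powr ((r+1)/r)) powr r = F powr (r+1)"
    using assms by (simp add: powr_powr)
  finally show ?thesis using assms by simp
qed

lemma nonzero_arc:
  fixes r c \<alpha> :: real
  assumes "r > 0" "c > 0" "\<alpha> > 0"
  shows "1 / (\<alpha> * c powr (-1/(r+1))) powr r = c powr (r/(r+1)) / \<alpha> powr r"
proof -
  have "(\<alpha> * c powr (-1/(r+1))) powr r = \<alpha> powr r * c powr (-r/(r+1))"
    using assms by (simp add: powr_mult powr_powr)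
  then show ?thesis using assms by (simp add: powr_minus_divide[symmetric] powr_minus divide_inverse)
qed

lemma cost_arc:
  fixes r c \<alpha> :: real
  assumes "r > 0" "c > 0"
  shows "c * (\<alpha> * c powr (-1/(r+1))) = \<alpha> * c powr (r/(r+1))"
proof -
  have "c powr (1 + (-1/(r+1))) = c powr 1 * c powr (-1/(r+1))"
    by (rule powr_add)
  then have "c * c powr (-1/(r+1)) = c powr (1 + (-1/(r+1)))"
    using assms by simp
  also have "1 + (-1/(r+1)) = r/(r+1)" using assms by (simp add: field_simps)
  finally show ?thesis by (simp add: mult.left_commute)
qed

theorem lemma6:
  fixes V :: "'v set" and A :: "'a set" and tail head :: "'a \<Rightarrow> 'v" and s t :: 'v
    and r B :: real and c \<gamma> :: "'a \<Rightarrow> real" and ybar :: "'a \<Rightarrow> ereal"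
  assumes "finite V" and "finite A"
    and "\<forall>a\<in>A. tail a \<in> V \<and> head a \<in> V"
    and "weakly_connected V A tail head"
    and "s \<in> V" and "t \<in> V" and "s \<noteq> t"
    and "r \<ge> 1" and "B > 0"
    and "\<forall>a\<in>A. c a \<ge> 0 \<and> \<gamma> a \<ge> 0"
    and "\<forall>a\<in>A. ybar a = \<infinity>"
    and "\<exists>x y. ndp_optimal V A tail head s t r c \<gamma> ybar B x y"
  shows "\<exists>x y P. ndp_optimal V A tail head s t r c \<gamma> ybar B x y \<and> undirected_st_path A tail head s t P \<and>
           (\<forall>a\<in>A - P. x a = 0 \<and> y a = 0)"
proof -
  have r0: "r > 0" using assms(8) by simp
  from assms(12) obtain x y where opt: "ndp_optimal V A tail head s t r c \<gamma> ybar B x y" by blast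
  have feas: "ndp_feasible V A tail head s t r ybar B x y"
    and optc: "\<And>x' y'. ndp_feasible V A tail head s t r ybar B x' y' \<Longrightarrow> ndp_cost A c \<gamma> x y \<le> ndp_cost A c \<gamma> x' y'"
    using opt unfolding ndp_optimal_def by auto
  have xy: "\<And>a. a \<in> A \<Longrightarrow> (x a = 0 \<or> x a = 1) \<and> y a \<ge> 0 \<and> (y a > 0 \<longrightarrow> x a = 1)"
    and R: "eff_resistance V A tail head s t r y \<le> ereal B"
    using feas unfolding ndp_feasible_def by auto
  let ?F = "st_flows V A tail head s t y"
  have Fne: "?F \<noteq> {}"
  proof
    assume "?F = {}"
    then have "eff_resistance V A tail head s t r y = \<infinity>"
      unfolding eff_resistance_def by (simp add: top_ereal_def)
    with R show False by simp
  qed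
  obtain f where f: "f \<in> ?F" and fmin: "\<And>g. g \<in> ?F \<Longrightarrow> Phi A r y f \<le> Phi A r y g"
    using flow_min_attained[OF assms(2) _ Fne, of r] r0 by auto
  have VB: "Phi A r y f \<le> B"
  proof -
    have "ereal (Phi A r y f) \<le> eff_resistance V A tail head s t r y"
      unfolding eff_resistance_def
    proof (rule Inf_greatest)
      fix z assume "z \<in> {ereal (\<Sum>a\<in>{a\<in>A. y a > 0}. \<bar>g a\<bar> powr (r + 1) / y a powr r) | g. g \<in> ?F}"
      then obtain g where "g \<in> ?F" "z = ereal (Phi A r y g)" unfolding Phi_def by auto
      then show "ereal (Phi A r y f) \<le> z" using fmin by auto
    qed
    then have "ereal (Phi A r y f) \<le> ereal B" using R by (rule order_trans)
    then show ?thesis by simp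
  qed
  define Sy where "Sy = {a\<in>A. y a > 0}"
  define S where "S = {a\<in>A. f a \<noteq> 0}"
  have fz: "\<And>a. a \<notin> Sy \<Longrightarrow> f a = 0" using f unfolding st_flows_def Sy_def by auto
  have SSy: "S \<subseteq> Sy" using fz S_def by auto
  have SyA: "Sy \<subseteq> A" using Sy_def by auto
  have finSy: "finite Sy" using SyA assms(2) finite_subset by auto
  define w where "w a = c a powr (r/(r+1))" for a
  have w0: "\<And>a. w a \<ge> 0" unfolding w_def by simp
  have fpot: "\<And>p. (\<Sum>a\<in>Sy. f a * (p (tail a) - p (head a))) = p s - p t"
    unfolding Sy_def by (rule flow_potential[OF f assms(2) assms(1) assms(3) assms(5-7)])
  have reach: "\<exists>vs es. walk S tail head s t vs es"
  proof (rule ccontr)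
    assume nr: "\<not> (\<exists>vs es. walk S tail head s t vs es)"
    define p where "p v = (if \<exists>vs es. walk S tail head v t vs es then 0 else (1::real))" for v
    have pt: "p t = 0" unfolding p_def using walk.wNil by metis
    have ps: "p s = 1" unfolding p_def using nr by simp
    have "(\<Sum>a\<in>Sy. f a * (p (tail a) - p (head a))) = 0"
    proof (rule sum.neutral, rule ballI)
      fix a assume aSy: "a \<in> Sy"
      show "f a * (p (tail a) - p (head a)) = 0"
      proof (cases "f a = 0")
        case False
        then have aS: "a \<in> S" using aSy S_def Sy_def by auto
        have j1: "joins tail head a (tail a) (head a)" and j2: "joins tail head a (head a) (tail a)"
          by (auto simp: joins_def)
        have "(\<exists>vs es. walk S tail head (tail a) t vs es) \<longleftrightarrow> (\<exists>vs es. walk S tail head (head a) t vs es)"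
          using walk.wCons[OF aS j1] walk.wCons[OF aS j2] by meson
        then have "p (tail a) = p (head a)" unfolding p_def by simp
        then show ?thesis by simp
      qed simp
    qed
    with fpot[of p] pt ps show False by simp
  qed
  define WS where "WS = {sum_list (map w es) | vs es. walk S tail head s t vs es \<and> distinct vs}"
  have WSfin: "finite WS"
  proof -
    have "WS \<subseteq> (\<lambda>es. sum_list (map w es)) ` {es. set es \<subseteq> A \<and> length es \<le> card V}"
    proof
      fix z assume "z \<in> WS"
      then obtain vs es where z: "z = sum_list (map w es)" "walk S tail head s t vs es" "distinct vs"
        unfolding WS_def by blast
      have idx: "length vs = Suc (length es)" "set es \<subseteq> S" using walk_index[OF z(2)] by auto
      have "set vs \<subseteq> V" using walk_set_V[OF z(2) assms(5) _ assms(3)] SSy SyA by auto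
      then have "length vs \<le> card V" using distinct_card[OF z(3)] card_mono[OF assms(1)] by metis
      then show "z \<in> (\<lambda>es. sum_list (map w es)) ` {es. set es \<subseteq> A \<and> length es \<le> card V}"
        using idx SSy SyA z(1) by auto
    qed
    moreover have "finite {es. set es \<subseteq> A \<and> length es \<le> card V}"
      by (rule finite_lists_length_le[OF assms(2)])
    ultimately show ?thesis by (meson finite_imageI finite_subset)
  qed
  have WSne: "WS \<noteq> {}"
  proof -
    obtain vs es where "walk S tail head s t vs es" using reach by blast
    then obtain vs' es' where "walk S tail head s t vs' es'" "distinct vs'"
      using walk_simple[of S tail head s t vs es w] w0 by metis
    then show ?thesis unfolding WS_def by blast
  qed
  define W where "W = Min WS"
  have "W \<in> WS" unfolding W_def by (rule Min_in[OF WSfin WSne])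
  then obtain vs0 es0 where p0: "walk S tail head s t vs0 es0" "distinct vs0" "W = sum_list (map w es0)"
    unfolding WS_def by blast
  have Wle: "W \<le> sum_list (map w es)" if wst: "walk S tail head s t vs es" for vs es
  proof -
    obtain vs' es' where h: "walk S tail head s t vs' es'" "distinct vs'" "sum_list (map w es') \<le> sum_list (map w es)"
      using walk_simple[OF wst, of w] w0 by metis
    have "W \<le> sum_list (map w es')" unfolding W_def
      by (rule Min_le[OF WSfin]) (use h in \<open>auto simp: WS_def\<close>)
    with h(3) show ?thesis by simp
  qed
  define X where "X v = {sum_list (map w es) | vs es. walk S tail head v t vs es}" for v
  define d where "d v = Inf (X v)" for v
  have Xnn: "z \<ge> 0" if "z \<in> X v" for v z
    using that w0 unfolding X_def by (auto intro!: sum_list_nonneg)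
  have bdd: "bdd_below (X v)" for v
    using Xnn by (meson bdd_below.I)
  have dt: "d t = 0"
  proof -
    have "walk S tail head t t [t] []" by (rule walk.wNil)
    then have "sum_list (map w []) \<in> X t" unfolding X_def by blast
    then have "0 \<in> X t" by simp
    then show ?thesis unfolding d_def using Xnn by (intro cInf_eq_minimum) auto
  qed
  have ds: "W \<le> d s"
  proof -
    have "X s \<noteq> {}" using reach unfolding X_def by blast
    then show ?thesis unfolding d_def
      by (rule cInf_greatest) (auto simp: X_def intro: Wle)
  qed
  have arc: "d u \<le> w a + d v" if aS: "a \<in> S" and j: "joins tail head a u v" for a u v
  proof -
    have j': "joins tail head a v u" using j by (auto simp: joins_def)
    show "d u \<le> w a + d v"
    proof (cases "X v = {}")
      case True
      have "X u = {}"
      proof (rule ccontr)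
        assume "X u \<noteq> {}"
        then obtain vs es where "walk S tail head u t vs es" unfolding X_def by auto
        then have "walk S tail head v t (v#vs) (a#es)" by (rule walk.wCons[OF aS j'])
        then have "sum_list (map w (a#es)) \<in> X v" unfolding X_def by blast
        with True show False by simp
      qed
      with True show ?thesis using w0[of a] unfolding d_def by simp
    next
      case False
      have "d u - w a \<le> d v" unfolding d_def[of v]
      proof (rule cInf_greatest[OF False])
        fix z assume "z \<in> X v"
        then obtain vs es where h: "walk S tail head v t vs es" "z = sum_list (map w es)" unfolding X_def by auto
        have "walk S tail head u t (u#vs) (a#es)" by (rule walk.wCons[OF aS j h(1)])
        then have "sum_list (map w (a#es)) \<in> X u" unfolding X_def by blast
        then have "w a + z \<in> X u" using h(2) by simp
        then have "d u \<le> w a + z" unfolding d_def by (rule cInf_lower[OF _ bdd])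
        then show "d u - w a \<le> z" by simp
      qed
      then show ?thesis by simp
    qed
  qed
  have dd: "\<bar>d (tail a) - d (head a)\<bar> \<le> w a" if "a \<in> S" for a
    using arc[OF that, of "tail a" "head a"] arc[OF that, of "head a" "tail a"] by (auto simp: joins_def)
  have Wflow: "W \<le> (\<Sum>a\<in>Sy. \<bar>f a\<bar> * w a)"
  proof -
    have "d s - d t = (\<Sum>a\<in>Sy. f a * (d (tail a) - d (head a)))" using fpot[of d] by simp
    also have "\<dots> \<le> (\<Sum>a\<in>Sy. \<bar>f a\<bar> * w a)"
    proof (rule sum_mono)
      fix a assume aSy: "a \<in> Sy"
      show "f a * (d (tail a) - d (head a)) \<le> \<bar>f a\<bar> * w a"
      proof (cases "f a = 0")
        case False
        then have aS: "a \<in> S" using aSy S_def Sy_def by auto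
        have "f a * (d (tail a) - d (head a)) \<le> \<bar>f a\<bar> * \<bar>d (tail a) - d (head a)\<bar>"
          by (metis abs_ge_self abs_mult)
        also have "\<dots> \<le> \<bar>f a\<bar> * w a" using dd[OF aS] by (intro mult_left_mono) auto
        finally show ?thesis .
      qed simp
    qed
    finally show ?thesis using ds dt by simp
  qed
  define P where "P = set es0"
  have PS: "P \<subseteq> S" using walk_index[OF p0(1)] P_def by auto
  have PA: "P \<subseteq> A" using PS SSy SyA by auto
  have finP: "finite P" unfolding P_def by simp
  have es0d: "distinct es0" using walk_distinct[OF p0(1,2)] .
  have WP: "W = (\<Sum>a\<in>P. w a)" using p0(3) es0d P_def by (simp add: sum.distinct_set_conv_list)
  define Zc where "Zc = {a. c a = 0}"
  have wZ: "w a = 0" if "a \<in> Zc" for a using that unfolding Zc_def w_def by simp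
  have WPZ: "W = (\<Sum>a\<in>P - Zc. w a)"
  proof -
    have "(\<Sum>a\<in>P. w a) = (\<Sum>a\<in>P \<inter> Zc. w a) + (\<Sum>a\<in>P - Zc. w a)"
      by (rule sum.Int_Diff[OF finP])
    moreover have "(\<Sum>a\<in>P \<inter> Zc. w a) = 0" using wZ by simp
    ultimately show ?thesis using WP by simp
  qed
  define Z where "Z = Sy \<inter> Zc"
  define VZ where "VZ = (\<Sum>a\<in>Z. \<bar>f a\<bar> powr (r+1) / y a powr r)"
  define D where "D = B - VZ"
  define \<alpha> where "\<alpha> = (W/D) powr (1/r)"
  define y' where "y' a = (if a \<in> P then (if c a = 0 then y a / \<bar>f a\<bar> powr ((r+1)/r) else \<alpha> * c a powr (-1/(r+1))) else 0)" for a
  define x' where "x' a = (if a \<in> P then 1 else (0::real))" for a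
  define C where "C = (\<Sum>a\<in>A. c a * y a)"
  have cpos: "c a > 0" if "a \<in> A" "c a \<noteq> 0" for a using that assms(10) by force
  have Phi_split: "Phi A r y f = VZ + (\<Sum>a\<in>Sy - Z. \<bar>f a\<bar> powr (r+1) / y a powr r)"
  proof -
    have "Phi A r y f = (\<Sum>a\<in>Sy. \<bar>f a\<bar> powr (r+1) / y a powr r)" unfolding Phi_def Sy_def by simp
    also have "\<dots> = (\<Sum>a\<in>Sy - Z. \<bar>f a\<bar> powr (r+1) / y a powr r) + VZ"
      unfolding VZ_def by (rule sum.subset_diff) (auto simp: Z_def finSy)
    finally show ?thesis by simp
  qed
  have restnn: "(\<Sum>a\<in>Sy - Z. \<bar>f a\<bar> powr (r+1) / y a powr r) \<ge> 0"
    by (intro sum_nonneg) auto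
  have VZnn: "VZ \<ge> 0" unfolding VZ_def by (intro sum_nonneg) auto
  have Cnn: "C \<ge> 0" unfolding C_def using assms(10) xy by (intro sum_nonneg) auto
  have key: "W > 0 \<and> D > 0 \<and> \<alpha> > 0 \<and> \<alpha> * W \<le> C" if ne: "P - Zc \<noteq> {}"
  proof -
    obtain a0 where a0: "a0 \<in> P" "a0 \<notin> Zc" using ne by auto
    have ca0: "c a0 > 0" using cpos[of a0] a0 PA Zc_def by auto
    have "w a0 > 0" unfolding w_def using ca0 by simp
    moreover have "w a0 \<le> W" unfolding WP using a0 finP w0 by (intro member_le_sum) auto
    ultimately have Wpos: "W > 0" by simp
    have a0S: "a0 \<in> S" using a0 PS by auto
    then have fa0: "f a0 \<noteq> 0" and ya0: "y a0 > 0" using S_def SSy Sy_def by auto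
    have "0 < \<bar>f a0\<bar> powr (r+1) / y a0 powr r" using fa0 ya0 by simp
    also have "\<dots> \<le> (\<Sum>a\<in>Sy - Z. \<bar>f a\<bar> powr (r+1) / y a powr r)"
      using a0 a0S SSy finSy by (intro member_le_sum) (auto simp: Z_def)
    finally have "0 < Phi A r y f - VZ" using Phi_split by simp
    then have Dpos: "D > 0" using VB unfolding D_def by simp
    have apos: "\<alpha> > 0" unfolding \<alpha>_def using Wpos Dpos by simp
    have ar: "\<alpha> powr r = W / D" unfolding \<alpha>_def using Wpos Dpos r0 by (simp add: powr_powr)
    have "W \<le> (\<Sum>a\<in>Sy. \<bar>f a\<bar> * w a)" by (rule Wflow)
    also have "\<dots> = (\<Sum>a\<in>Sy - Z. \<bar>f a\<bar> * w a)"
      by (rule sum.mono_neutral_right[OF finSy]) (auto simp: Z_def wZ)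
    also have "\<dots> \<le> (\<Sum>a\<in>Sy - Z. (r/(r+1)) * (c a * y a / \<alpha>) + (1/(r+1)) * (\<alpha> powr r * (\<bar>f a\<bar> powr (r+1) / y a powr r)))"
    proof (rule sum_mono)
      fix a assume a: "a \<in> Sy - Z"
      then have "c a > 0" "y a > 0" using cpos[of a] SyA unfolding Z_def Zc_def Sy_def by auto
      then show "\<bar>f a\<bar> * w a \<le> (r/(r+1)) * (c a * y a / \<alpha>) + (1/(r+1)) * (\<alpha> powr r * (\<bar>f a\<bar> powr (r+1) / y a powr r))"
        using young_arc[OF r0 _ _ apos, of "c a" "y a" "\<bar>f a\<bar>"] unfolding w_def by (simp add: mult.commute)
    qed
    also have "\<dots> = (r/(r+1)) / \<alpha> * (\<Sum>a\<in>Sy - Z. c a * y a) + (1/(r+1)) * \<alpha> powr r * (\<Sum>a\<in>Sy - Z. \<bar>f a\<bar> powr (r+1) / y a powr r)"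
      by (simp add: sum.distrib sum_distrib_left sum_divide_distrib mult.assoc)
    also have "\<dots> \<le> (r/(r+1)) / \<alpha> * C + (1/(r+1)) * \<alpha> powr r * D"
    proof (rule add_mono)
      have "(\<Sum>a\<in>Sy - Z. c a * y a) \<le> C" unfolding C_def
        using SyA assms(2) assms(10) xy by (intro sum_mono2) auto
      then show "(r/(r+1)) / \<alpha> * (\<Sum>a\<in>Sy - Z. c a * y a) \<le> (r/(r+1)) / \<alpha> * C"
        using apos r0 by (intro mult_left_mono) auto
      have "(\<Sum>a\<in>Sy - Z. \<bar>f a\<bar> powr (r+1) / y a powr r) \<le> D" using Phi_split VB D_def by simp
      then show "(1/(r+1)) * \<alpha> powr r * (\<Sum>a\<in>Sy - Z. \<bar>f a\<bar> powr (r+1) / y a powr r) \<le> (1/(r+1)) * \<alpha> powr r * D"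
        using r0 by (intro mult_left_mono) auto
    qed
    also have "(1/(r+1)) * \<alpha> powr r * D = W / (r+1)" using ar Dpos by simp
    finally have "W \<le> (r/(r+1)) / \<alpha> * C + W / (r+1)" .
    moreover have "W - W / (r+1) = W * r / (r+1)" using r0 by (simp add: field_simps)
    ultimately have "W * r / (r+1) \<le> (r/(r+1)) / \<alpha> * C" by linarith
    moreover have "W * r / (r+1) = (r/(r+1)) * W" by simp
    moreover have "(r/(r+1)) / \<alpha> * C = (r/(r+1)) * (C / \<alpha>)" by simp
    ultimately have "(r/(r+1)) * W \<le> (r/(r+1)) * (C / \<alpha>)" by simp
    moreover have "r/(r+1) > 0" using r0 by simp
    ultimately have "W \<le> C / \<alpha>" by (rule mult_left_le_imp_le)
    then have "\<alpha> * W \<le> C" using apos by (simp add: field_simps)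
    then show ?thesis using Wpos Dpos apos by simp
  qed
  have ypos: "y' a > 0" if aP: "a \<in> P" for a
  proof -
    have aS: "a \<in> S" using aP PS by auto
    then have fa: "f a \<noteq> 0" and ya: "y a > 0" using S_def SSy Sy_def by auto
    show ?thesis
    proof (cases "c a = 0")
      case True
      then show ?thesis unfolding y'_def using aP fa ya by simp
    next
      case False
      then have "P - Zc \<noteq> {}" using aP Zc_def by auto
      then have "\<alpha> > 0" using key by blast
      moreover have "c a > 0" using cpos[of a] aP PA False by auto
      ultimately show ?thesis unfolding y'_def using aP False by simp
    qed
  qed
  have y'nn: "y' a \<ge> 0" for a
  proof (cases "a \<in> P")
    case True then show ?thesis using ypos[OF True] by simp
  qed (simp add: y'_def)
  have supp: "{a\<in>A. y' a > 0} = P" using ypos PA y'_def by force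
  define g where "g = pf tail vs0 es0"
  have gflow: "g \<in> st_flows V A tail head s t y'"
    unfolding st_flows_def supp
  proof (intro CollectI conjI allI impI ballI)
    fix a assume "a \<notin> P"
    then show "g a = 0" unfolding g_def P_def using pf_zero[OF p0(1)] by simp
  next
    fix v assume "v \<in> V"
    have net: "(\<Sum>b\<in>P. g b * ((if tail b = v then 1 else 0) - (if head b = v then 1 else 0))) = (if s = v then 1 else 0) - (if t = v then 1 else 0)"
      unfolding g_def using pf_net[OF p0(1) finP, of v] P_def by simp
    have s1: "{a\<in>A. y' a > 0 \<and> tail a = v} = {a\<in>P. tail a = v}" using supp by auto
    have s2: "{a\<in>A. y' a > 0 \<and> head a = v} = {a\<in>P. head a = v}" using supp by auto
    have "(\<Sum>a\<in>{a\<in>P. tail a = v}. g a) - (\<Sum>a\<in>{a\<in>P. head a = v}. g a)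
        = (\<Sum>b\<in>P. g b * ((if tail b = v then 1 else 0) - (if head b = v then 1 else 0)))"
      unfolding sum.inter_filter[OF finP] sum_subtractf[symmetric] by (intro sum.cong) auto
    then show "(\<Sum>a\<in>{a\<in>A. y' a > 0 \<and> tail a = v}. g a) - (\<Sum>a\<in>{a\<in>A. y' a > 0 \<and> head a = v}. g a) =
          (if v = s then 1 else if v = t then - 1 else 0)"
      unfolding s1 s2 net using assms(7) by auto
  qed
  have gval: "(\<Sum>a\<in>P. \<bar>g a\<bar> powr (r + 1) / y' a powr r) \<le> B"
  proof -
    have "(\<Sum>a\<in>P. \<bar>g a\<bar> powr (r + 1) / y' a powr r) = (\<Sum>a\<in>P. 1 / y' a powr r)"
      using pf_abs[OF p0(1) es0d] unfolding g_def P_def by (intro sum.cong) auto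
    also have "\<dots> = (\<Sum>a\<in>P \<inter> Zc. 1 / y' a powr r) + (\<Sum>a\<in>P - Zc. 1 / y' a powr r)"
      by (rule sum.Int_Diff[OF finP])
    also have "(\<Sum>a\<in>P \<inter> Zc. 1 / y' a powr r) = (\<Sum>a\<in>P \<inter> Zc. \<bar>f a\<bar> powr (r+1) / y a powr r)"
    proof (intro sum.cong refl)
      fix a assume a: "a \<in> P \<inter> Zc"
      then have aS: "a \<in> S" using PS by auto
      then have fa: "f a \<noteq> 0" and ya: "y a > 0" using S_def SSy Sy_def by auto
      show "1 / y' a powr r = \<bar>f a\<bar> powr (r+1) / y a powr r"
        using zero_arc[OF r0 ya, of "\<bar>f a\<bar>"] fa a unfolding y'_def Zc_def by simp
    qed
    also have "\<dots> \<le> VZ" unfolding VZ_def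
      using PS SSy finSy by (intro sum_mono2) (auto simp: Z_def)
    finally have le1: "(\<Sum>a\<in>P. \<bar>g a\<bar> powr (r + 1) / y' a powr r) \<le> VZ + (\<Sum>a\<in>P - Zc. 1 / y' a powr r)" by simp
    show ?thesis
    proof (cases "P - Zc = {}")
      case True
      then have "(\<Sum>a\<in>P - Zc. 1 / y' a powr r) = 0" by (simp only: sum.empty)
      then show ?thesis using le1 Phi_split restnn VB by linarith
    next
      case False
      then have k: "W > 0" "D > 0" "\<alpha> > 0" using key by auto
      have "(\<Sum>a\<in>P - Zc. 1 / y' a powr r) = (\<Sum>a\<in>P - Zc. w a / \<alpha> powr r)"
      proof (intro sum.cong refl)
        fix a assume a: "a \<in> P - Zc"
        then have "c a > 0" using cpos[of a] PA Zc_def by auto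
        then show "1 / y' a powr r = w a / \<alpha> powr r"
          using nonzero_arc[OF r0 _ k(3), of "c a"] a unfolding y'_def w_def Zc_def by simp
      qed
      also have "\<dots> = W / \<alpha> powr r" unfolding WPZ by (simp add: sum_divide_distrib)
      also have "\<alpha> powr r = W / D" unfolding \<alpha>_def using k r0 by (simp add: powr_powr)
      also have "W / (W / D) = D" using k by simp
      finally show ?thesis using le1 D_def by simp
    qed
  qed
  have feas': "ndp_feasible V A tail head s t r ybar B x' y'"
    unfolding ndp_feasible_def
  proof (rule conjI)
    show "\<forall>a\<in>A. (x' a = 0 \<or> x' a = 1) \<and> y' a \<ge> 0 \<and> ereal (y' a) \<le> ybar a \<and> (y' a > 0 \<longrightarrow> x' a = 1)"
      using y'nn assms(11) supp unfolding x'_def by auto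
  next
    have "eff_resistance V A tail head s t r y' \<le> ereal (\<Sum>a\<in>{a\<in>A. y' a > 0}. \<bar>g a\<bar> powr (r + 1) / y' a powr r)"
      unfolding eff_resistance_def using gflow by (intro Inf_lower) blast
    also have "\<dots> \<le> ereal B" using gval supp by simp
    finally show "eff_resistance V A tail head s t r y' \<le> ereal B" .
  qed
  have cost': "ndp_cost A c \<gamma> x' y' \<le> ndp_cost A c \<gamma> x y"
  proof -
    have "ndp_cost A c \<gamma> x' y' = (\<Sum>a\<in>P. c a * y' a + \<gamma> a * x' a)"
      unfolding ndp_cost_def
      by (rule sum.mono_neutral_right[OF assms(2) PA]) (auto simp: x'_def y'_def)
    also have "\<dots> = (\<Sum>a\<in>P. c a * y' a) + (\<Sum>a\<in>P. \<gamma> a)"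
      by (simp add: sum.distrib x'_def)
    also have "(\<Sum>a\<in>P. c a * y' a) \<le> C"
    proof (cases "P - Zc = {}")
      case True
      then have "(\<Sum>a\<in>P. c a * y' a) = 0" by (intro sum.neutral) (auto simp: Zc_def)
      then show ?thesis using Cnn by simp
    next
      case False
      then have k: "\<alpha> * W \<le> C" using key by auto
      have "(\<Sum>a\<in>P. c a * y' a) = (\<Sum>a\<in>P \<inter> Zc. c a * y' a) + (\<Sum>a\<in>P - Zc. c a * y' a)"
        by (rule sum.Int_Diff[OF finP])
      also have "(\<Sum>a\<in>P \<inter> Zc. c a * y' a) = 0" by (intro sum.neutral) (auto simp: Zc_def)
      also have "(\<Sum>a\<in>P - Zc. c a * y' a) = (\<Sum>a\<in>P - Zc. \<alpha> * w a)"
      proof (intro sum.cong refl)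
        fix a assume a: "a \<in> P - Zc"
        then have "c a > 0" using cpos[of a] PA Zc_def by auto
        then show "c a * y' a = \<alpha> * w a"
          using cost_arc[OF r0, of "c a" \<alpha>] a unfolding y'_def w_def Zc_def by simp
      qed
      also have "\<dots> = \<alpha> * W" unfolding WPZ by (simp add: sum_distrib_left)
      finally show ?thesis using k by simp
    qed
    also have "(\<Sum>a\<in>P. \<gamma> a) \<le> (\<Sum>a\<in>A. \<gamma> a * x a)"
    proof -
      have "(\<Sum>a\<in>P. \<gamma> a) = (\<Sum>a\<in>P. \<gamma> a * x a)"
      proof (intro sum.cong refl)
        fix a assume "a \<in> P"
        then have "a \<in> Sy" using PS SSy by auto
        then have "x a = 1" using xy Sy_def by auto
        then show "\<gamma> a = \<gamma> a * x a" by simp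
      qed
      also have "\<dots> \<le> (\<Sum>a\<in>A. \<gamma> a * x a)"
      proof (rule sum_mono2[OF assms(2) PA])
        fix b assume "b \<in> A - P"
        then have "\<gamma> b \<ge> 0" "x b \<ge> 0" using assms(10) xy[of b] by auto
        then show "0 \<le> \<gamma> b * x b" by simp
      qed
      finally show ?thesis .
    qed
    also have "C + (\<Sum>a\<in>A. \<gamma> a * x a) = ndp_cost A c \<gamma> x y"
      unfolding C_def ndp_cost_def by (simp add: sum.distrib)
    finally show ?thesis by simp
  qed
  have optimal': "ndp_optimal V A tail head s t r c \<gamma> ybar B x' y'"
    unfolding ndp_optimal_def using feas' cost' optc by (meson order_trans)
  have path: "undirected_st_path A tail head s t P"
    unfolding undirected_st_path_def
  proof (intro exI[of _ vs0] exI[of _ es0] conjI)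
    show "length vs0 = Suc (length es0)" "hd vs0 = s" "last vs0 = t" "distinct vs0" "set es0 \<subseteq> A" "P = set es0"
      using walk_index[OF p0(1)] p0(2) PA P_def by auto
    show "\<forall>i<length es0. (tail (es0 ! i) = vs0 ! i \<and> head (es0 ! i) = vs0 ! Suc i) \<or>
                        (head (es0 ! i) = vs0 ! i \<and> tail (es0 ! i) = vs0 ! Suc i)"
      using walk_index[OF p0(1)] unfolding joins_def by blast
  qed
  show ?thesis
    using optimal' path by (intro exI[of _ x'] exI[of _ y'] exI[of _ P]) (auto simp: x'_def y'_def)
qed

end
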